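(* Let $K\subset\mathbb R^n$ be a bounded convex set with nonempty interior such that $0\in K$. Then $$\ell(K)\,L(K^\circ)\ge\frac1{2n}\qquad\text{and}\qquad \ell(K^\circ)\,L(K)\ge\frac1{2n}.$$
   Context: $K^\circ=\{z\in\mathbb R^n: z\cdot x\le1\ \forall x\in K\}$ is the polar body. For a set $E$, $\ell(E)$ is the radius of the largest ball contained in $E$ (inner radius) and $L(E)$ the radius of the smallest ball containing $E$ (outer radius), with $L(E)=\infty$ if $E$ is unbounded. *)

theory Defs
  imports "HOL-Analysis.Analysis"
begin

definition polar :: "'a::euclidean_space set \<Rightarrow> 'a set" where
  "polar K = {z. \<forall>x\<in>K. inner z x \<le> 1}"

definition inner_radius :: "'a::euclidean_space set \<Rightarrow> ereal" where
  "inner_radius E = Sup {ereal r | r x. 0 \<le> r \<and> cball x r \<subseteq> E}"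

text \<open>Outer radius: infimum of radii of balls containing E; equals \<infinity> (Inf of the
  empty set) when E is unbounded.\<close>
definition outer_radius :: "'a::euclidean_space set \<Rightarrow> ereal" where
  "outer_radius E = Inf {ereal r | r x. 0 \<le> r \<and> E \<subseteq> cball x r}"

end

theory Submission
  imports Defs
begin

lemma combine_inf:
  fixes a :: ereal and T :: "ereal set" and c :: real
  assumes a: "a > 0" and c: "c > 0" and Tc: "\<forall>y\<in>T. ereal c \<le> y"
    and Ta: "\<forall>y\<in>T. ereal (1/2) \<le> a * y"
  shows "ereal (1/2) \<le> a * Inf T"
proof -
  have I: "ereal c \<le> Inf T" using Tc by (auto intro: Inf_greatest)
  hence Ipos: "Inf T > 0" using c by (simp add: order_less_le_trans[rotated])
  show ?thesis
  proof (cases a)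
    case PInf
    then show ?thesis using Ipos by simp
  next
    case MInf then show ?thesis using a by simp
  next
    case (real \<alpha>)
    with a have al: "\<alpha> > 0" by simp
    have "ereal (1/(2*\<alpha>)) \<le> Inf T"
    proof (rule Inf_greatest)
      fix y assume y: "y \<in> T"
      have yc: "ereal c \<le> y" using Tc y by blast
      have ya: "ereal (1/2) \<le> ereal \<alpha> * y" using Ta y real by blast
      show "ereal (1/(2*\<alpha>)) \<le> y"
      proof (cases y)
        case (real t)
        with ya have "1/2 \<le> \<alpha> * t" by simp
        hence "1/(2*\<alpha>) \<le> t" using al by (simp add: field_simps)
        then show ?thesis using real by simp
      next
        case PInf then show ?thesis by simp
      next
        case MInf then show ?thesis using yc by simp
      qed
    qed
    hence "ereal \<alpha> * ereal (1/(2*\<alpha>)) \<le> ereal \<alpha> * Inf T"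
      using al by (intro ereal_mult_left_mono) auto
    moreover have "ereal \<alpha> * ereal (1/(2*\<alpha>)) = ereal (1/2)" using al by simp
    ultimately show ?thesis using real by metis
  qed
qed

lemma inner_radius_ge:
  assumes "cball x r \<subseteq> E" "0 \<le> r"
  shows "ereal r \<le> inner_radius E"
  unfolding inner_radius_def using assms by (intro Sup_upper) blast

lemma radius_le:
  fixes x y :: "'a::euclidean_space"
  assumes "cball x r \<subseteq> E" "E \<subseteq> cball y R" "0 \<le> r"
  shows "r \<le> R"
proof -
  have "diameter (cball x r) \<le> diameter (cball y R)"
    using assms by (intro diameter_subset) auto
  moreover have "\<not> R < 0"
  proof
    assume "R < 0"
    hence "cball y R = {}" by simp
    thus False using assms centre_in_cball[of x r] by blast
  qed
  ultimately show ?thesis using assms(3) by (auto split: if_splits)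
qed

lemma inner_radius_dense:
  fixes E :: "'a::euclidean_space set"
  assumes "\<And>r. 0 < r \<Longrightarrow> r < \<rho> \<Longrightarrow> cball 0 r \<subseteq> E" "\<rho> > 0"
  shows "ereal \<rho> \<le> inner_radius E"
proof (rule dense_le)
  fix y assume y: "y < ereal \<rho>"
  have "ereal (\<rho>/2) \<le> inner_radius E"
    using assms by (intro inner_radius_ge[of 0]) auto
  show "y \<le> inner_radius E"
  proof (cases y)
    case (real t)
    show ?thesis
    proof (cases "t \<le> \<rho>/2")
      case True thus ?thesis using real \<open>ereal (\<rho>/2) \<le> inner_radius E\<close>
        by (meson ereal_less_eq(3) order_trans)
    next
      case False
      hence "t > 0" "t < \<rho>" using real y assms(2) by auto
      hence "cball 0 t \<subseteq> E" using assms(1) by blast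
      thus ?thesis using real inner_radius_ge[of 0 t E] \<open>t > 0\<close> by simp
    qed
  next
    case PInf thus ?thesis using y by simp
  next
    case MInf thus ?thesis by simp
  qed
qed

theorem mainTheorem11:
  fixes K :: "'a::euclidean_space set"
  assumes "bounded K" and "convex K" and "interior K \<noteq> {}" and "0 \<in> K"
  shows "inner_radius K * outer_radius (polar K) \<ge> ereal (1 / (2 * real DIM('a))) \<and>
         inner_radius (polar K) * outer_radius K \<ge> ereal (1 / (2 * real DIM('a)))"
proof -
  have half: "ereal (1 / (2 * real DIM('a))) \<le> ereal (1/2)"
    using DIM_positive[where 'a='a] by (simp add: field_simps)
  obtain x0 e where e: "e > 0" "ball x0 e \<subseteq> K"
    proof -
    from assms(3) obtain x0 where "x0 \<in> interior K" by blast
    thus ?thesis using that by (auto simp: mem_interior)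
  qed
  have cb0: "cball x0 (e/2) \<subseteq> K" proof -
    have "cball x0 (e/2) \<subseteq> ball x0 e" using e by (auto simp: subset_eq)
    thus ?thesis using e by blast
  qed
  obtain B0 y0 where B0: "K \<subseteq> cball y0 B0" "0 \<le> B0"
    using assms(1) bounded_subset_cball by blast
  define B where "B = dist 0 y0 + B0 + 1"
  have Bpos: "B > 0" unfolding B_def using B0 zero_le_dist[of 0 y0] by linarith
  have KB: "K \<subseteq> cball 0 B"
  proof
    fix x assume "x \<in> K"
    hence "dist y0 x \<le> B0" using B0 by auto
    thus "x \<in> cball 0 B" unfolding B_def using dist_triangle[of 0 x y0]
      by (simp add: dist_commute)
  qed
  have polball: "cball 0 (1/B) \<subseteq> polar K"
  proof
    fix z :: 'a assume z: "z \<in> cball 0 (1/B)"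
    { fix x assume "x \<in> K"
      hence "norm x \<le> B" using KB by auto
      moreover have "norm z \<le> 1/B" using z by auto
      ultimately have "norm z * norm x \<le> 1/B * B"
        using Bpos by (intro mult_mono) auto
      hence "inner z x \<le> 1" using Bpos Cauchy_Schwarz_ineq2[of z x] by simp }
    thus "z \<in> polar K" unfolding polar_def by auto
  qed
  have p1: "ereal (1/2) \<le> inner_radius K * outer_radius (polar K)"
    unfolding outer_radius_def[of "polar K"]
  proof (rule combine_inf[where c="1/B"])
    show "inner_radius K > 0"
      proof -
      have "ereal (e/2) \<le> inner_radius K" using inner_radius_ge[OF cb0] e by simp
      moreover have "(0::ereal) < ereal (e/2)" using e by simp
      ultimately show ?thesis by (rule order_less_le_trans[rotated])
    qed
    show "1/B > 0" using Bpos by simp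
    show "\<forall>y\<in>{ereal r |r x. 0 \<le> r \<and> polar K \<subseteq> cball x r}. ereal (1/B) \<le> y"
      using radius_le[OF polball] Bpos by auto
    show "\<forall>y\<in>{ereal r |r x. 0 \<le> r \<and> polar K \<subseteq> cball x r}. ereal (1/2) \<le> inner_radius K * y"
    proof safe
      fix R y assume R: "0 \<le> R" "polar K \<subseteq> cball y R"
      have RB: "1/B \<le> R" using radius_le[OF polball R(2)] Bpos by simp
      hence Rpos: "R > 0" using Bpos by (meson divide_pos_pos less_le_trans zero_less_one)
      have "0 \<in> polar K" unfolding polar_def by simp
      hence "0 \<in> cball y R" using R by blast
      hence ny: "norm y \<le> R" by (simp add: dist_norm)
      have pK: "polar K \<subseteq> cball 0 (2*R)"
      proof
        fix w assume "w \<in> polar K"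
        hence "dist y w \<le> R" using R by auto
        thus "w \<in> cball 0 (2*R)" using ny norm_triangle_ineq[of "y" "w - y"]
          by (auto simp: dist_norm norm_minus_commute)
      qed
      have clos: "cball 0 (1/(2*R)) \<subseteq> closure K"
      proof
        fix z :: 'a assume z: "z \<in> cball 0 (1/(2*R))"
        show "z \<in> closure K"
        proof (rule ccontr)
          assume nz: "z \<notin> closure K"
          obtain a b where ab: "inner a z < b" "\<forall>x\<in>closure K. inner a x > b"
            using separating_hyperplane_closed_point[OF convex_closure[OF assms(2)] closed_closure nz]
            by blast
          have bneg: "b < 0" using ab(2) assms(4) closure_subset by fastforce
          define w where "w = a /\<^sub>R b"
          have "w \<in> polar K"
            unfolding polar_def
          proof safe
            fix x assume "x \<in> K"
            hence "inner a x > b" using ab(2) closure_subset by blast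
            thus "inner w x \<le> 1" using bneg unfolding w_def
              by (simp add: divide_simps)
          qed
          hence nw: "norm w \<le> 2*R" using pK by auto
          have "inner w z > 1" using ab(1) bneg unfolding w_def by (simp add: divide_simps)
          moreover have "inner w z \<le> norm w * norm z" by (rule norm_cauchy_schwarz)
          moreover have "norm w * norm z \<le> 2*R * (1/(2*R))"
            using z nw Rpos by (intro mult_mono) auto
          ultimately show False using Rpos by simp
        qed
      qed
      have "ereal (1/(2*R)) \<le> inner_radius K"
      proof (rule inner_radius_dense)
        show "1/(2*R) > 0" using Rpos by simp
        fix r assume r: "0 < r" "r < 1/(2*R)"
        have "ball 0 (1/(2*R)) \<subseteq> interior (closure K)"
          using clos by (meson interior_maximal ball_subset_cball open_ball order_trans)
        hence "ball 0 (1/(2*R)) \<subseteq> K"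
          using convex_interior_closure[OF assms(2)] interior_subset by blast
        moreover have "cball 0 r \<subseteq> ball 0 (1/(2*R))" using r by (auto simp: subset_eq)
        ultimately show "cball 0 r \<subseteq> K" by blast
      qed
      hence "ereal (1/(2*R)) * ereal R \<le> inner_radius K * ereal R"
        using Rpos by (intro ereal_mult_right_mono) auto
      thus "ereal (1/2) \<le> inner_radius K * ereal R" using Rpos by simp
    qed
  qed
  have p2: "ereal (1/2) \<le> inner_radius (polar K) * outer_radius K"
    unfolding outer_radius_def[of K]
  proof (rule combine_inf[where c="e/2"])
    show "inner_radius (polar K) > 0"
      proof -
      have "ereal (1/B) \<le> inner_radius (polar K)" using inner_radius_ge[OF polball] Bpos by simp
      moreover have "(0::ereal) < ereal (1/B)" using Bpos by simp
      ultimately show ?thesis by (rule order_less_le_trans[rotated])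
    qed
    show "e/2 > 0" using e by simp
    show "\<forall>y\<in>{ereal r |r x. 0 \<le> r \<and> K \<subseteq> cball x r}. ereal (e/2) \<le> y"
      using radius_le[OF cb0] e by auto
    show "\<forall>y\<in>{ereal r |r x. 0 \<le> r \<and> K \<subseteq> cball x r}. ereal (1/2) \<le> inner_radius (polar K) * y"
    proof safe
      fix R y assume R: "0 \<le> R" "K \<subseteq> cball y R"
      have "e/2 \<le> R" using radius_le[OF cb0 R(2)] e by simp
      hence Rpos: "R > 0" using e by simp
      hence ny: "norm y \<le> R" using R assms(4) by (auto simp: dist_norm subset_iff)
      have pK: "K \<subseteq> cball 0 (2*R)"
      proof
        fix w assume "w \<in> K"
        hence "dist y w \<le> R" using R by auto
        thus "w \<in> cball 0 (2*R)" using ny norm_triangle_ineq[of "y" "w - y"]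
          by (auto simp: dist_norm norm_minus_commute)
      qed
      have pb: "cball 0 (1/(2*R)) \<subseteq> polar K"
      proof
        fix z :: 'a assume z: "z \<in> cball 0 (1/(2*R))"
        { fix x assume "x \<in> K"
          hence "norm x \<le> 2*R" using pK by auto
          moreover have "norm z \<le> 1/(2*R)" using z by auto
          ultimately have "norm z * norm x \<le> 1/(2*R) * (2*R)"
            using Rpos by (intro mult_mono) auto
          hence "inner z x \<le> 1" using Rpos Cauchy_Schwarz_ineq2[of z x] by simp }
        thus "z \<in> polar K" unfolding polar_def by auto
      qed
      have "ereal (1/(2*R)) \<le> inner_radius (polar K)"
        using inner_radius_ge[OF pb] Rpos by simp
      hence "ereal (1/(2*R)) * ereal R \<le> inner_radius (polar K) * ereal R"
        using Rpos by (intro ereal_mult_right_mono) auto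
      thus "ereal (1/2) \<le> inner_radius (polar K) * ereal R" using Rpos by simp
    qed
  qed
  show ?thesis using p1 p2 half by (meson order_trans)
qed

end
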